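(* For every $n\ge2$: no $\omega\in\widetilde{S}_n$ avoids $123$; exactly one $\omega\in\widetilde{S}_n$ (the identity) avoids $132$, and exactly one (the identity) avoids $213$; and the number of $\omega\in\widetilde{S}_n$ avoiding $231$ equals the number avoiding $312$, both being $\binom{2n-1}{n}$. Equivalently, with $f^p(t)=\sum_{n\ge2}\#\{\omega\in\widetilde{S}_n:\omega\text{ avoids }p\}\,t^n$, we have $f^{123}(t)=0$, $f^{132}(t)=f^{213}(t)=\sum_{n\ge2}t^n$, and $f^{231}(t)=f^{312}(t)=\sum_{n\ge2}\binom{2n-1}{n}t^n$.
   Context: For $n\ge 2$, the affine symmetric group $\widetilde{S}_n$ is the set of bijections $\omega:\mathbb{Z}\to\mathbb{Z}$ such that $\omega(i+n)=\omega(i)+n$ for all $i\in\mathbb{Z}$ and $\sum_{i=1}^n\omega(i)=\binom{n+1}{2}$; write $\omega_i=\omega(i)$. For $p\in S_k$, $\omega$ contains $p$ if there exist integers $i_1<\cdots<i_k$ such that $\omega_{i_1}\cdots\omega_{i_k}$ has the same relative order as $p_1\cdots p_k$; otherwise $\omega$ avoids $p$. *)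

theory Defs
  imports Main
begin

definition affine_perm :: "nat \<Rightarrow> (int \<Rightarrow> int) \<Rightarrow> bool" where
  "affine_perm n w \<longleftrightarrow> bij w \<and> (\<forall>i. w (i + int n) = w i + int n)
     \<and> (\<Sum>i\<in>{1..int n}. w i) = int ((n + 1) choose 2)"

definition affine_sym_group :: "nat \<Rightarrow> (int \<Rightarrow> int) set" where
  "affine_sym_group n = {w. affine_perm n w}"

definition contains_pattern :: "(int \<Rightarrow> int) \<Rightarrow> nat list \<Rightarrow> bool" where
  "contains_pattern w p \<longleftrightarrow>
     (\<exists>idx :: nat \<Rightarrow> int. (\<forall>a b. a < b \<and> b < length p \<longrightarrow> idx a < idx b) \<and>
        (\<forall>a b. a < length p \<and> b < length p \<longrightarrow> (w (idx a) < w (idx b) \<longleftrightarrow> p ! a < p ! b)))"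

definition avoids_pattern :: "(int \<Rightarrow> int) \<Rightarrow> nat list \<Rightarrow> bool" where
  "avoids_pattern w p \<longleftrightarrow> \<not> contains_pattern w p"

definition avoiders :: "nat \<Rightarrow> nat list \<Rightarrow> (int \<Rightarrow> int) set" where
  "avoiders n p = {w \<in> affine_sym_group n. avoids_pattern w p}"

end

theory Submission
  imports Defs
begin


lemma periodic_k:
  fixes f :: "int \<Rightarrow> int" and N :: int
  assumes per: "\<And>i. f (i + N) = f i + N"
  shows "f (i + k * N) = f i + k * N"
proof (induct k rule: int_induct[where k=0])
  case base then show ?case by simp
next
  case (step1 k)
  have "f (i + (k+1) * N) = f ((i + k*N) + N)" by (simp add: algebra_simps)
  also have "\<dots> = f (i + k*N) + N" by (rule per)
  finally show ?case using step1 by (simp add: algebra_simps)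
next
  case (step2 k)
  have "f (i + k * N) = f ((i + (k-1)*N) + N)" by (simp add: algebra_simps)
  also have "\<dots> = f (i + (k-1)*N) + N" by (rule per)
  finally show ?case using step2 by (simp add: algebra_simps)
qed

lemma periodicP_k:
  fixes P :: "int \<Rightarrow> 'a" and N :: int
  assumes per: "\<And>i. P (i + N) = P i"
  shows "P (i + k * N) = P i"
proof (induct k rule: int_induct[where k=0])
  case base then show ?case by simp
next
  case (step1 k)
  have "P (i + (k+1) * N) = P ((i + k*N) + N)" by (simp add: algebra_simps)
  also have "\<dots> = P (i + k*N)" by (rule per)
  finally show ?case using step1 by simp
next
  case (step2 k)
  have "P (i + k * N) = P ((i + (k-1)*N) + N)" by (simp add: algebra_simps)
  also have "\<dots> = P (i + (k-1)*N)" by (rule per)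
  finally show ?case using step2 by simp
qed

lemma window_decomp:
  fixes N p :: int
  assumes "N > 0"
  shows "\<exists>r k. r \<in> {1..N} \<and> p = r + k * N"
proof -
  have "p = ((p-1) mod N + 1) + ((p-1) div N) * N" by (simp add: algebra_simps)
  moreover have "(p-1) mod N + 1 \<in> {1..N}" using assms
    by (simp add: pos_mod_bound pos_mod_sign add1_zle_eq)
  ultimately show ?thesis by blast
qed

lemma window_reduce:
  fixes N :: int and P :: "int \<Rightarrow> bool"
  assumes "N > 0" "\<And>i. P (i + N) = P i" "\<And>r. r \<in> {1..N} \<Longrightarrow> P r"
  shows "P p"
proof -
  obtain r k where "r \<in> {1..N}" "p = r + k * N" using window_decomp[OF assms(1)] by blast
  then show ?thesis using periodicP_k[of P N r k] assms(2,3) by simp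
qed

definition hO :: "(int \<Rightarrow> int) \<Rightarrow> int \<Rightarrow> int" where
  "hO F i = i + int (LEAST d. F (i + int d) \<le> F (i - 1))"

context
  fixes F :: "int \<Rightarrow> int" and N :: int
  assumes Npos: "N > 0" and Oper: "\<And>q. F (q + N) = F q"
begin

lemma hO_ex: "F (i + int (nat (N - 1))) \<le> F (i - 1)"
proof -
  have "i + int (nat (N - 1)) = (i - 1) + N" using Npos by simp
  then have "F (i + int (nat (N - 1))) = F ((i - 1) + N)" by metis
  then show ?thesis using Oper[of "i-1"] by simp
qed

lemma hO_props:
  shows "F (hO F i) \<le> F (i-1)" "i \<le> hO F i" "hO F i < i + N"
    "\<And>p. i \<le> p \<Longrightarrow> p < hO F i \<Longrightarrow> F (i-1) < F p"
proof -
  let ?D = "LEAST d. F (i + int d) \<le> F (i - 1)"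
  show "F (hO F i) \<le> F (i-1)" unfolding hO_def using LeastI[where P="\<lambda>d. F (i + int d) \<le> F (i-1)", OF hO_ex] .
  show "i \<le> hO F i" unfolding hO_def by simp
  have "?D \<le> nat (N-1)" by (rule Least_le) (rule hO_ex)
  then show "hO F i < i + N" unfolding hO_def using Npos by linarith
  fix p assume "i \<le> p" "p < hO F i"
  then have "nat (p - i) < ?D" unfolding hO_def by linarith
  then have "\<not> F (i + int (nat (p - i))) \<le> F (i - 1)" by (rule not_less_Least)
  then show "F (i-1) < F p" using \<open>i \<le> p\<close> by simp
qed

end

lemma hO_eqI:
  assumes "i \<le> p" "F p \<le> F (i-1)" "\<And>q. i \<le> q \<Longrightarrow> q < p \<Longrightarrow> F (i-1) < F q"
  shows "hO F i = p"
proof -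
  have "(LEAST d. F (i + int d) \<le> F (i - 1)) = nat (p - i)"
  proof (rule Least_equality)
    show "F (i + int (nat (p - i))) \<le> F (i - 1)" using assms by simp
    fix y assume "F (i + int y) \<le> F (i - 1)"
    then show "nat (p - i) \<le> y" using assms(3)[of "i + int y"] by linarith
  qed
  then show ?thesis unfolding hO_def using assms(1) by simp
qed

lemma hO_shift: "hO (\<lambda>q. F q + c) = hO F"
  by (simp add: hO_def fun_eq_iff)

definition good :: "int \<Rightarrow> (int \<Rightarrow> int) \<Rightarrow> bool" where
  "good N h \<longleftrightarrow> (\<forall>i. i \<le> h i \<and> h i < i + N) \<and> (\<forall>i. h (i + N) = h i + N)
     \<and> (\<forall>i j. i < j \<and> j \<le> h i \<longrightarrow> h j \<le> h i)"

lemma hO_good: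
  assumes Npos: "N > 0" and Oper: "\<And>q. F (q + N) = F q"
  shows "good N (hO F)"
proof -
  note P = hO_props[where F=F and N=N, OF Npos Oper]
  have per: "hO F (i + N) = hO F i + N" for i
  proof (rule hO_eqI)
    show "i + N \<le> hO F i + N" using P(2)[of i] by simp
    have "F (hO F i + N) = F (hO F i)" by (rule Oper)
    moreover have "F (i + N - 1) = F (i - 1)" using Oper[of "i-1"] by (simp add: algebra_simps)
    ultimately show "F (hO F i + N) \<le> F (i + N - 1)" using P(1)[of i] by simp
    fix q assume "i + N \<le> q" "q < hO F i + N"
    then have "F (i-1) < F (q - N)" using P(4)[of i "q - N"] by simp
    moreover have "F (q - N) = F q" using Oper[of "q - N"] by simp
    moreover have "F (i + N - 1) = F (i - 1)" using Oper[of "i-1"] by (simp add: algebra_simps)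
    ultimately show "F (i + N - 1) < F q" by simp
  qed
  have lam: "hO F j \<le> hO F i" if "i < j" "j \<le> hO F i" for i j
  proof (rule ccontr)
    assume "\<not> hO F j \<le> hO F i"
    then have "F (j-1) < F (hO F i)" using P(4)[of j "hO F i"] that by simp
    moreover have "F (i-1) < F (j-1)" using P(4)[of i "j-1"] that by simp
    ultimately show False using P(1)[of i] by simp
  qed
  show ?thesis unfolding good_def using P(2,3) per lam by blast
qed



lemma hO_count:
  fixes F :: "int \<Rightarrow> int" and N :: int
  assumes Npos: "N > 0" and Oper: "\<And>q. F (q + N) = F q"
    and step: "\<And>q. F q \<le> F (q - 1) + 1"
  shows "card {i. hO F i = p} = nat (F (p-1) - F p + 1)"
proof -
  note P = hO_props[where F=F and N=N, OF Npos Oper]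
  have "bij_betw (\<lambda>i. F (i-1)) {i. hO F i = p} {F p .. F (p-1)}"
    unfolding bij_betw_def
  proof (intro conjI)
    show "inj_on (\<lambda>i. F (i-1)) {i. hO F i = p}"
    proof (rule inj_onI)
      fix i i' assume a: "i \<in> {i. hO F i = p}" "i' \<in> {i. hO F i = p}" "F (i-1) = F (i'-1)"
      show "i = i'"
      proof (rule ccontr)
        assume "i \<noteq> i'"
        then consider "i < i'" | "i' < i" by linarith
        then show False
        proof cases
          case 1
          then have "F (i-1) < F (i'-1)" using P(4)[of i "i'-1"] P(2)[of i'] a by simp
          then show False using a by simp
        next
          case 2
          then have "F (i'-1) < F (i-1)" using P(4)[of i' "i-1"] P(2)[of i] a by simp
          then show False using a by simp
        qed
      qed
    qed
    show "(\<lambda>i. F (i-1)) ` {i. hO F i = p} = {F p .. F (p-1)}"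
    proof (intro equalityI subsetI)
      fix m assume "m \<in> (\<lambda>i. F (i-1)) ` {i. hO F i = p}"
      then obtain i where i: "hO F i = p" "m = F (i-1)" by auto
      have "F p \<le> F (i-1)" using P(1)[of i] i by simp
      moreover have "F (i-1) \<le> F (p-1)"
      proof (cases "i = p")
        case True then show ?thesis by simp
      next
        case False
        then have "i < p" using P(2)[of i] i by simp
        then show ?thesis using P(4)[of i "p-1"] i by simp
      qed
      ultimately show "m \<in> {F p .. F (p-1)}" using i by simp
    next
      fix m assume m: "m \<in> {F p .. F (p-1)}"
      define Q where "Q = {q. p - N \<le> q \<and> q < p \<and> F q \<le> m}"
      have finQ: "finite Q" unfolding Q_def
        by (rule finite_subset[of _ "{p-N..<p}"]) auto
      have "p - N \<in> Q" unfolding Q_def using Npos m Oper[of "p-N"] by simp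
      then have neQ: "Q \<noteq> {}" by blast
      define q where "q = Max Q"
      have qQ: "q \<in> Q" unfolding q_def using finQ neQ by simp
      have above: "m < F r" if "q < r" "r < p" for r
      proof (rule ccontr)
        assume "\<not> m < F r"
        then have "r \<in> Q" unfolding Q_def using that qQ unfolding Q_def by simp
        then have "r \<le> q" unfolding q_def using finQ by simp
        then show False using that by simp
      qed
      have Fq: "F q = m"
      proof (cases "q + 1 < p")
        case True
        then have "m < F (q+1)" using above by simp
        moreover have "F (q+1) \<le> F q + 1" using step[of "q+1"] by simp
        ultimately show ?thesis using qQ unfolding Q_def by simp
      next
        case False
        then have "q = p - 1" using qQ unfolding Q_def by simp
        then show ?thesis using qQ m unfolding Q_def by simp
      qed
      have "hO F (q+1) = p"
      proof (rule hO_eqI)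
        show "q + 1 \<le> p" using qQ unfolding Q_def by simp
        show "F p \<le> F (q + 1 - 1)" using Fq m by simp
        fix r assume "q + 1 \<le> r" "r < p"
        then show "F (q + 1 - 1) < F r" using above[of r] Fq by simp
      qed
      moreover have "m = F ((q+1) - 1)" using Fq by simp
      ultimately show "m \<in> (\<lambda>i. F (i-1)) ` {i. hO F i = p}" by blast
    qed
  qed
  then have "card {i. hO F i = p} = card {F p .. F (p-1)}" by (rule bij_betw_same_card)
  then show ?thesis by simp
qed

definition Oh :: "(int \<Rightarrow> int) \<Rightarrow> int \<Rightarrow> int" where
  "Oh h q = int (card {k. k \<le> q \<and> q < h k})"

context
  fixes h :: "int \<Rightarrow> int" and N :: int
  assumes gd: "good N h" and Npos: "N > 0"
begin

lemma gd_le: "i \<le> h i" and gd_lt: "h i < i + N" and gd_per: "h (i + N) = h i + N"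
  and gd_lam: "i < j \<Longrightarrow> j \<le> h i \<Longrightarrow> h j \<le> h i"
  using gd unfolding good_def by blast+

lemma fin_open: "finite {k. k \<le> q \<and> q < h k}"
proof (rule finite_subset[of _ "{q - N<..q}"])
  show "{k. k \<le> q \<and> q < h k} \<subseteq> {q - N<..q}"
  proof
    fix k assume "k \<in> {k. k \<le> q \<and> q < h k}"
    then show "k \<in> {q - N<..q}" using gd_lt[of k] by simp
  qed
qed simp

lemma fin_close: "finite {i. h i = p}"
proof (rule finite_subset[of _ "{p - N<..p}"])
  show "{i. h i = p} \<subseteq> {p - N<..p}"
  proof
    fix k assume "k \<in> {i. h i = p}"
    then show "k \<in> {p - N<..p}" using gd_lt[of k] gd_le[of k] by simp
  qed
qed simp

lemma Oh_step: "Oh h p + int (card {i. h i = p}) = Oh h (p-1) + 1"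
proof -
  have eq: "{k. k \<le> p \<and> p < h k} \<union> {i. h i = p} = insert p {k. k \<le> p - 1 \<and> p - 1 < h k}"
    using gd_le by (auto; smt (verit))
  have "card ({k. k \<le> p \<and> p < h k} \<union> {i. h i = p}) = card {k. k \<le> p \<and> p < h k} + card {i. h i = p}"
    by (rule card_Un_disjoint) (auto simp: fin_open fin_close)
  moreover have "card (insert p {k. k \<le> p - 1 \<and> p - 1 < h k}) = card {k. k \<le> p - 1 \<and> p - 1 < h k} + 1"
    using fin_open[of "p-1"] by simp
  ultimately show ?thesis using eq unfolding Oh_def by simp
qed

lemma shift_img: "{k. P (k + N)} = (\<lambda>k. k - N) ` {k. P k}"
  by (auto simp: image_iff intro!: exI[of _ "_ + N"])

lemma Oh_per: "Oh h (q + N) = Oh h q"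
proof -
  have "{k. k \<le> q + N \<and> q + N < h k} = (\<lambda>k. k + N) ` {k. k \<le> q \<and> q < h k}"
  proof (intro equalityI subsetI)
    fix k assume "k \<in> {k. k \<le> q + N \<and> q + N < h k}"
    then have "k - N \<in> {k. k \<le> q \<and> q < h k}" using gd_per[of "k - N"] by simp
    then show "k \<in> (\<lambda>k. k + N) ` {k. k \<le> q \<and> q < h k}" by (auto simp: image_iff intro!: bexI[of _ "k - N"])
  next
    fix k assume "k \<in> (\<lambda>k. k + N) ` {k. k \<le> q \<and> q < h k}"
    then show "k \<in> {k. k \<le> q + N \<and> q + N < h k}" using gd_per by auto
  qed
  moreover have "inj (\<lambda>k::int. k + N)" by (simp add: inj_on_def)
  ultimately show ?thesis unfolding Oh_def by (simp add: card_image inj_on_subset)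
qed

lemma cnt_per: "card {i. h i = p + N} = card {i. h i = p}"
proof -
  have "{i. h i = p + N} = (\<lambda>k. k + N) ` {i. h i = p}"
  proof (intro equalityI subsetI)
    fix k assume "k \<in> {i. h i = p + N}"
    then have "k - N \<in> {i. h i = p}" using gd_per[of "k - N"] by simp
    then show "k \<in> (\<lambda>k. k + N) ` {i. h i = p}" by (auto simp: image_iff intro!: bexI[of _ "k - N"])
  next
    fix k assume "k \<in> (\<lambda>k. k + N) ` {i. h i = p}"
    then show "k \<in> {i. h i = p + N}" using gd_per by auto
  qed
  moreover have "inj (\<lambda>k::int. k + N)" by (simp add: inj_on_def)
  ultimately show ?thesis by (simp add: card_image inj_on_subset)
qed

lemma hO_Oh: "hO (Oh h) i = h i"
proof (rule hO_eqI)
  show "i \<le> h i" by (rule gd_le)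
  have "{k. k \<le> h i \<and> h i < h k} \<subseteq> {k. k \<le> i - 1 \<and> i - 1 < h k}"
  proof
    fix k assume k: "k \<in> {k. k \<le> h i \<and> h i < h k}"
    have "k < i"
    proof (rule ccontr)
      assume "\<not> k < i"
      then consider "k = i" | "i < k" by linarith
      then show False
      proof cases
        case 1 then show False using k by simp
      next
        case 2 then show False using k gd_lam[of i k] by simp
      qed
    qed
    then show "k \<in> {k. k \<le> i - 1 \<and> i - 1 < h k}" using k gd_le[of i] by simp
  qed
  then show "Oh h (h i) \<le> Oh h (i - 1)" unfolding Oh_def
    using card_mono[OF fin_open[of "i-1"]] by simp
  fix q assume q: "i \<le> q" "q < h i"
  have "insert i {k. k \<le> i - 1 \<and> i - 1 < h k} \<subseteq> {k. k \<le> q \<and> q < h k}"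
  proof
    fix k assume "k \<in> insert i {k. k \<le> i - 1 \<and> i - 1 < h k}"
    then consider "k = i" | "k < i" "i \<le> h k" by auto
    then show "k \<in> {k. k \<le> q \<and> q < h k}"
    proof cases
      case 1 then show ?thesis using q by simp
    next
      case 2 then show ?thesis using gd_lam[of k i] q by simp
    qed
  qed
  then have "card (insert i {k. k \<le> i - 1 \<and> i - 1 < h k}) \<le> card {k. k \<le> q \<and> q < h k}"
    using card_mono[OF fin_open] by blast
  moreover have "card (insert i {k. k \<le> i - 1 \<and> i - 1 < h k}) = card {k. k \<le> i - 1 \<and> i - 1 < h k} + 1"
    using fin_open[of "i-1"] by simp
  ultimately show "Oh h (i - 1) < Oh h q" unfolding Oh_def by simp
qed

end



definition Lh :: "(int \<Rightarrow> int) \<Rightarrow> int \<Rightarrow> int set" where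
  "Lh h i = {k. k < i \<and> i \<le> h k}"

definition wh :: "(int \<Rightarrow> int) \<Rightarrow> int \<Rightarrow> int" where
  "wh h i = h i - int (card (Lh h i))"

context
  fixes h :: "int \<Rightarrow> int" and N :: int
  assumes gd: "good N h" and Npos: "N > 0"
begin

lemma fin_Lh: "finite (Lh h i)"
proof (rule finite_subset[of _ "{i - N<..<i}"])
  show "Lh h i \<subseteq> {i - N<..<i}"
  proof
    fix k assume "k \<in> Lh h i"
    then show "k \<in> {i - N<..<i}" using gd_lt[OF gd Npos, of k] unfolding Lh_def by simp
  qed
qed simp

lemma wh_less: assumes "i < j" "j \<le> h i" shows "wh h j < wh h i"
proof -
  have hj: "h j \<le> h i" using gd_lam[OF gd Npos] assms by blast
  have "insert i (Lh h i) \<subseteq> Lh h j"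
  proof
    fix k assume "k \<in> insert i (Lh h i)"
    then consider "k = i" | "k < i" "i \<le> h k" unfolding Lh_def by auto
    then show "k \<in> Lh h j"
    proof cases
      case 1 then show ?thesis using assms unfolding Lh_def by simp
    next
      case 2
      then have "h i \<le> h k" using gd_lam[OF gd Npos, of k i] by simp
      then show ?thesis using 2 assms unfolding Lh_def by simp
    qed
  qed
  then have "card (insert i (Lh h i)) \<le> card (Lh h j)" using card_mono fin_Lh by blast
  moreover have "i \<notin> Lh h i" unfolding Lh_def by simp
  ultimately have "card (Lh h i) + 1 \<le> card (Lh h j)" using fin_Lh by simp
  then show ?thesis unfolding wh_def using hj by simp
qed

lemma wh_greater: assumes "i < j" "\<not> j \<le> h i" shows "wh h i < wh h j"
proof -
  have "Lh h j \<subseteq> Lh h i \<union> {h i<..<j}"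
  proof
    fix k assume k: "k \<in> Lh h j"
    show "k \<in> Lh h i \<union> {h i<..<j}"
    proof (cases "h i < k")
      case True then show ?thesis using k unfolding Lh_def by simp
    next
      case False
      consider "k < i" | "k = i" | "i < k" by linarith
      then show ?thesis
      proof cases
        case 1 then show ?thesis using k assms unfolding Lh_def by simp
      next
        case 2 then show ?thesis using k assms unfolding Lh_def by simp
      next
        case 3
        then have "h k \<le> h i" using gd_lam[OF gd Npos, of i k] False by simp
        then show ?thesis using k assms unfolding Lh_def by simp
      qed
    qed
  qed
  then have "card (Lh h j) \<le> card (Lh h i \<union> {h i<..<j})" by (intro card_mono) (auto simp: fin_Lh)
  also have "\<dots> \<le> card (Lh h i) + card {h i<..<j}" by (rule card_Un_le)
  finally have "int (card (Lh h j)) \<le> int (card (Lh h i)) + (j - h i - 1)"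
    using assms by simp
  moreover have "j \<le> h j" using gd_le[OF gd Npos] by simp
  ultimately show ?thesis unfolding wh_def by simp
qed

lemma wh_inj: "inj (wh h)"
proof (rule injI)
  fix i j assume eq: "wh h i = wh h j"
  show "i = j"
  proof (rule ccontr)
    assume "i \<noteq> j"
    then consider "i < j" | "j < i" by linarith
    then show False
    proof cases
      case 1 then show False using wh_less[of i j] wh_greater[of i j] eq by (cases "j \<le> h i") auto
    next
      case 2 then show False using wh_less[of j i] wh_greater[of j i] eq by (cases "i \<le> h j") auto
    qed
  qed
qed

lemma wh_order: "i < j \<Longrightarrow> (wh h j < wh h i \<longleftrightarrow> j \<le> h i)"
  using wh_less[of i j] wh_greater[of i j] by (cases "j \<le> h i") auto

lemma wh_per: "wh h (i + N) = wh h i + N"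
proof -
  have "Lh h (i + N) = (\<lambda>k. k + N) ` Lh h i"
  proof (intro equalityI subsetI)
    fix k assume "k \<in> Lh h (i + N)"
    then have "k - N \<in> Lh h i" using gd_per[OF gd Npos, of "k - N"] unfolding Lh_def by simp
    then show "k \<in> (\<lambda>k. k + N) ` Lh h i" by (auto simp: image_iff intro!: bexI[of _ "k - N"])
  next
    fix k assume "k \<in> (\<lambda>k. k + N) ` Lh h i"
    then show "k \<in> Lh h (i + N)" using gd_per[OF gd Npos] unfolding Lh_def by auto
  qed
  moreover have "inj (\<lambda>k::int. k + N)" by (simp add: inj_on_def)
  ultimately have "card (Lh h (i + N)) = card (Lh h i)" by (simp add: card_image inj_on_subset)
  then show ?thesis unfolding wh_def using gd_per[OF gd Npos, of i] by simp
qed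

end



section \<open>Periodic injective functions\<close>

context
  fixes f :: "int \<Rightarrow> int" and N :: int
  assumes Npos: "N > 0" and per: "\<And>i. f (i + N) = f i + N" and inj: "inj f"
begin

lemma per_mod_bij: "bij_betw (\<lambda>i. f i mod N) {1..N} {0..<N}"
proof -
  have injm: "inj_on (\<lambda>i. f i mod N) {1..N}"
  proof (rule inj_onI)
    fix i j assume ij: "i \<in> {1..N}" "j \<in> {1..N}" "f i mod N = f j mod N"
    then have "N dvd (f i - f j)" by (simp add: mod_eq_dvd_iff)
    then obtain t where t: "f i - f j = N * t" by (auto simp: dvd_def)
    moreover have "f (j + t * N) = f j + t * N" by (rule periodic_k[of f N, OF per])
    moreover have "t * N = N * t" by (rule mult.commute)
    ultimately have "f i = f (j + t * N)" by linarith
    then have "i = j + t * N" using inj by (simp add: inj_eq)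
    then have tn: "t * N = i - j" by simp
    have b: "- N < i - j" "i - j < N" using ij by auto
    have c1: False if "t \<ge> 1"
    proof -
      have "1 * N \<le> t * N" using Npos that by (intro mult_right_mono) auto
      then show False using tn b by simp
    qed
    have c2: False if "t \<le> -1"
    proof -
      have "t * N \<le> (-1) * N" using Npos that by (intro mult_right_mono) auto
      then show False using tn b by simp
    qed
    have "t = 0"
    proof (rule ccontr)
      assume "t \<noteq> 0" then have "t \<ge> 1 \<or> t \<le> -1" by linarith
      then show False using c1 c2 by blast
    qed
    then show "i = j" using \<open>i = j + t * N\<close> by simp
  qed
  have sub: "(\<lambda>i. f i mod N) ` {1..N} \<subseteq> {0..<N}" using Npos by auto
  have "card ((\<lambda>i. f i mod N) ` {1..N}) = card {0..<N}"
    using card_image[OF injm] by simp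
  then have "(\<lambda>i. f i mod N) ` {1..N} = {0..<N}"
    using card_subset_eq[OF _ sub] by simp
  then show ?thesis using injm unfolding bij_betw_def by simp
qed

lemma per_surj: "surj f"
proof -
  { fix v
    have "v mod N \<in> {0..<N}" using Npos by simp
    then have "v mod N \<in> (\<lambda>i. f i mod N) ` {1..N}"
      using per_mod_bij unfolding bij_betw_def by simp
    then obtain i where i: "i \<in> {1..N}" "f i mod N = v mod N" by (auto simp: image_iff)
    then have "N dvd (v - f i)" by (metis mod_eq_dvd_iff)
    then obtain t where "v - f i = N * t" by (auto simp: dvd_def)
    moreover have "f (i + t * N) = f i + t * N" by (rule periodic_k[of f N, OF per])
    moreover have "t * N = N * t" by (rule mult.commute)
    ultimately have "v = f (i + t * N)" by linarith
    then have "v \<in> range f" by blast }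
  then show ?thesis by blast
qed

lemma per_sum_mod: "(\<Sum>i\<in>{1..N}. f i) mod N = (\<Sum>r\<in>{0..<N}. r) mod N"
proof -
  have "(\<Sum>i\<in>{1..N}. f i) mod N = (\<Sum>i\<in>{1..N}. f i mod N) mod N" by (rule mod_sum_eq[symmetric])
  also have "(\<Sum>i\<in>{1..N}. f i mod N) = (\<Sum>r\<in>{0..<N}. r)"
    using sum.reindex_bij_betw[OF per_mod_bij, of "\<lambda>r. r"] by simp
  finally show ?thesis .
qed

end

lemma incr_bij_shift:
  fixes f :: "int \<Rightarrow> int"
  assumes "surj f" and mono: "\<And>a b. a < b \<Longrightarrow> f a < f b"
  shows "f x = f 0 + x"
proof -
  have s: "f (a + 1) = f a + 1" for a
  proof (rule ccontr)
    assume "f (a + 1) \<noteq> f a + 1"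
    moreover have "f a < f (a + 1)" using mono by simp
    ultimately have "f a + 1 < f (a + 1)" by simp
    obtain y where y: "f y = f a + 1" using assms(1) by (metis surjD)
    have "a < y"
    proof (rule ccontr)
      assume "\<not> a < y" then have "y < a \<or> y = a" by auto
      then show False using mono[of y a] y by auto
    qed
    moreover have "y < a + 1"
    proof (rule ccontr)
      assume "\<not> y < a + 1" then have "a + 1 < y \<or> y = a + 1" by auto
      then show False using mono[of "a+1" y] y \<open>f a + 1 < f (a + 1)\<close> by auto
    qed
    ultimately show False by simp
  qed
  show ?thesis
  proof (induct x rule: int_induct[where k=0])
    case base then show ?case by simp
  next
    case (step1 i) then show ?case using s[of i] by simp
  next
    case (step2 i) then show ?case using s[of "i-1"] by simp
  qed
qed

lemma order_iso_shift:
  fixes w1 w2 :: "int \<Rightarrow> int"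
  assumes "bij w1" "bij w2" and ord: "\<And>i j. w1 i < w1 j \<longleftrightarrow> w2 i < w2 j"
  shows "\<exists>c. \<forall>i. w2 i = w1 i + c"
proof -
  define f where "f = w2 \<circ> inv w1"
  have inv1: "w1 (inv w1 a) = a" for a using assms(1) by (simp add: bij_is_surj surj_f_inv_f)
  have "bij (inv w1)" using assms(1) by (rule bij_imp_bij_inv)
  then have "bij f" unfolding f_def using assms(2) by (rule bij_comp)
  then have "surj f" by (rule bij_is_surj)
  moreover have "f a < f b" if "a < b" for a b
    unfolding f_def using ord[of "inv w1 a" "inv w1 b"] inv1 that by simp
  ultimately have fx: "f x = f 0 + x" for x by (rule incr_bij_shift)
  have "w2 i = w1 i + f 0" for i
  proof -
    have "inv w1 (w1 i) = i" using assms(1) by (simp add: bij_is_inj)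
    then have "f (w1 i) = w2 i" unfolding f_def by simp
    then show ?thesis using fx[of "w1 i"] by simp
  qed
  then show ?thesis by blast
qed



lemma interval_set:
  fixes S :: "int set"
  assumes fin: "finite S" and gt: "\<And>k. k \<in> S \<Longrightarrow> i < k"
    and dc: "\<And>k j. k \<in> S \<Longrightarrow> i < j \<Longrightarrow> j < k \<Longrightarrow> j \<in> S"
  shows "S = {i<..i + int (card S)}"
proof (cases "S = {}")
  case True then show ?thesis by simp
next
  case False
  define m where "m = Max S"
  have mS: "m \<in> S" unfolding m_def using fin False by simp
  have "S = {i<..m}"
  proof (intro equalityI subsetI)
    fix k assume "k \<in> S"
    then show "k \<in> {i<..m}" using gt[of k] fin unfolding m_def by simp
  next
    fix j assume "j \<in> {i<..m}"
    then show "j \<in> S" using dc[OF mS, of j] mS by (cases "j = m") auto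
  qed
  moreover have "i < m" using gt mS by simp
  ultimately show ?thesis by simp
qed

definition rset :: "(int \<Rightarrow> int) \<Rightarrow> int \<Rightarrow> int set" where
  "rset w i = {k. i < k \<and> w k < w i}"

definition hw :: "(int \<Rightarrow> int) \<Rightarrow> int \<Rightarrow> int" where
  "hw w i = i + int (card (rset w i))"

context
  fixes w :: "int \<Rightarrow> int" and N :: int
  assumes Npos: "N > 0" and per: "\<And>i. w (i + N) = w i + N" and bw: "bij w"
    and av: "\<And>i j k. i < j \<Longrightarrow> j < k \<Longrightarrow> \<not> (w k < w i \<and> w i < w j)"
begin

lemma w_bound: "\<exists>M. \<forall>x. x - w x \<le> M"
proof -
  define M where "M = Max ((\<lambda>r. r - w r) ` {1..N})"
  have "x - w x \<le> M" for x
  proof -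
    obtain r k where r: "r \<in> {1..N}" "x = r + k * N" using window_decomp[OF Npos] by blast
    have "w x = w r + k * N" using r periodic_k[of w N, OF per] by simp
    then have "x - w x = r - w r" using r by simp
    also have "\<dots> \<le> M" unfolding M_def using r by (intro Max_ge) auto
    finally show ?thesis .
  qed
  then show ?thesis by blast
qed

lemma fin_rset: "finite (rset w i)"
proof -
  obtain M where M: "\<And>x. x - w x \<le> M" using w_bound by blast
  show ?thesis
  proof (rule finite_subset[of _ "{i<..w i + M}"])
    show "rset w i \<subseteq> {i<..w i + M}"
    proof
      fix k assume "k \<in> rset w i"
      then show "k \<in> {i<..w i + M}" using M[of k] unfolding rset_def by simp
    qed
  qed simp
qed

lemma winj: "w a = w b \<Longrightarrow> a = b"
  using bw by (simp add: bij_def inj_eq)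

lemma rset_int: "rset w i = {i<..hw w i}"
  unfolding hw_def
proof (rule interval_set[OF fin_rset])
  show "\<And>k. k \<in> rset w i \<Longrightarrow> i < k" unfolding rset_def by simp
  fix k j assume k: "k \<in> rset w i" and j: "i < j" "j < k"
  show "j \<in> rset w i"
  proof (rule ccontr)
    assume "j \<notin> rset w i"
    then have "w i \<le> w j" using j unfolding rset_def by simp
    moreover have "w i \<noteq> w j" using winj[of i j] j by auto
    ultimately show False using av[of i j k] j k unfolding rset_def by simp
  qed
qed

lemma hw_order: "i < j \<Longrightarrow> (w j < w i \<longleftrightarrow> j \<le> hw w i)"
  using rset_int[of i] unfolding rset_def by (auto simp: set_eq_iff)

lemma hw_good: "good N (hw w)"
proof -
  have ge: "i \<le> hw w i" for i unfolding hw_def by simp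
  have lt: "hw w i < i + N" for i
  proof (rule ccontr)
    assume "\<not> hw w i < i + N"
    then have "w (i + N) < w i" using hw_order[of i "i + N"] Npos by simp
    then show False using per[of i] Npos by simp
  qed
  have pr: "hw w (i + N) = hw w i + N" for i
  proof -
    have "rset w (i + N) = (\<lambda>k. k + N) ` rset w i"
    proof (intro equalityI subsetI)
      fix k assume "k \<in> rset w (i + N)"
      then have "k - N \<in> rset w i" using per[of "k - N"] per[of i] unfolding rset_def by simp
      then show "k \<in> (\<lambda>k. k + N) ` rset w i" by (auto simp: image_iff intro!: bexI[of _ "k - N"])
    next
      fix k assume "k \<in> (\<lambda>k. k + N) ` rset w i"
      then show "k \<in> rset w (i + N)" using per unfolding rset_def by auto
    qed
    moreover have "inj (\<lambda>k::int. k + N)" by (simp add: inj_on_def)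
    ultimately have "card (rset w (i + N)) = card (rset w i)" by (simp add: card_image inj_on_subset)
    then show ?thesis unfolding hw_def by simp
  qed
  have lam: "hw w j \<le> hw w i" if "i < j" "j \<le> hw w i" for i j
  proof (rule ccontr)
    assume c: "\<not> hw w j \<le> hw w i"
    have "w j < w i" using hw_order[of i j] that by simp
    moreover have "w (hw w j) < w j" using hw_order[of j "hw w j"] c that by simp
    ultimately have "w (hw w j) < w i" by simp
    then have "hw w j \<le> hw w i" using hw_order[of i "hw w j"] c that by simp
    then show False using c by simp
  qed
  show ?thesis unfolding good_def using ge lt pr lam by blast
qed

end



lemma gauss_int: "2 * (\<Sum>i\<in>{1..int n}. i) = int n * (int n + 1)"
proof (induct n)
  case 0 then show ?case by simp
next
  case (Suc n)
  have "{1..int (Suc n)} = insert (1 + int n) {1..int n}"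
    using atLeastAtMostPlus1_int_conv[of 1 "int n"] by simp
  then have "(\<Sum>i\<in>{1..int (Suc n)}. i) = (1 + int n) + (\<Sum>i\<in>{1..int n}. i)" by simp
  then show ?case using Suc by (simp add: algebra_simps)
qed

lemma choose2_int: "2 * int ((n + 1) choose 2) = int n * (int n + 1)"
proof -
  have "(n + 1) choose 2 = (n + 1) * n div 2" by (simp add: choose_two)
  moreover have "even ((n + 1) * n)" by simp
  ultimately have "2 * ((n + 1) choose 2) = (n + 1) * n" by simp
  then have "int (2 * ((n + 1) choose 2)) = int ((n + 1) * n)" by simp
  then show ?thesis by (simp add: algebra_simps)
qed

lemma gauss_choose: "(\<Sum>i\<in>{1..int n}. i) = int ((n + 1) choose 2)"
  using gauss_int[of n] choose2_int[of n] by simp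

lemma contains3:
  "contains_pattern w [p, q, r] \<longleftrightarrow> (\<exists>i j k. i < j \<and> j < k \<and>
      (w i < w j \<longleftrightarrow> p < q) \<and> (w j < w i \<longleftrightarrow> q < p) \<and>
      (w i < w k \<longleftrightarrow> p < r) \<and> (w k < w i \<longleftrightarrow> r < p) \<and>
      (w j < w k \<longleftrightarrow> q < r) \<and> (w k < w j \<longleftrightarrow> r < q))"
proof
  assume "contains_pattern w [p, q, r]"
  then obtain idx :: "nat \<Rightarrow> int" where
    a: "\<forall>a b. a < b \<and> b < length [p,q,r] \<longrightarrow> idx a < idx b" and
    b: "\<forall>a b. a < length [p,q,r] \<and> b < length [p,q,r] \<longrightarrow> (w (idx a) < w (idx b) \<longleftrightarrow> [p,q,r] ! a < [p,q,r] ! b)"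
    unfolding contains_pattern_def by blast
  show "\<exists>i j k. i < j \<and> j < k \<and>
      (w i < w j \<longleftrightarrow> p < q) \<and> (w j < w i \<longleftrightarrow> q < p) \<and>
      (w i < w k \<longleftrightarrow> p < r) \<and> (w k < w i \<longleftrightarrow> r < p) \<and>
      (w j < w k \<longleftrightarrow> q < r) \<and> (w k < w j \<longleftrightarrow> r < q)"
    apply (rule exI[of _ "idx 0"], rule exI[of _ "idx 1"], rule exI[of _ "idx 2"])
    using a[rule_format, of 0 1] a[rule_format, of 1 2]
      b[rule_format, of 0 1] b[rule_format, of 1 0] b[rule_format, of 0 2]
      b[rule_format, of 2 0] b[rule_format, of 1 2] b[rule_format, of 2 1]
    by simp
next
  assume "\<exists>i j k. i < j \<and> j < k \<and>
      (w i < w j \<longleftrightarrow> p < q) \<and> (w j < w i \<longleftrightarrow> q < p) \<and>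
      (w i < w k \<longleftrightarrow> p < r) \<and> (w k < w i \<longleftrightarrow> r < p) \<and>
      (w j < w k \<longleftrightarrow> q < r) \<and> (w k < w j \<longleftrightarrow> r < q)"
  then obtain i j k where h: "i < j" "j < k"
      "(w i < w j \<longleftrightarrow> p < q)" "(w j < w i \<longleftrightarrow> q < p)"
      "(w i < w k \<longleftrightarrow> p < r)" "(w k < w i \<longleftrightarrow> r < p)"
      "(w j < w k \<longleftrightarrow> q < r)" "(w k < w j \<longleftrightarrow> r < q)" by blast
  define idx where "idx = (\<lambda>x::nat. if x = 0 then i else if x = 1 then j else k)"
  have three: "x < length [p,q,r] \<Longrightarrow> x = 0 \<or> x = 1 \<or> x = 2" for x by auto
  have "\<forall>a b. a < b \<and> b < length [p,q,r] \<longrightarrow> idx a < idx b"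
  proof (intro allI impI)
    fix a b assume ab: "a < b \<and> b < length [p,q,r]"
    then show "idx a < idx b" using three[of a] three[of b] h unfolding idx_def by auto
  qed
  moreover have "\<forall>a b. a < length [p,q,r] \<and> b < length [p,q,r] \<longrightarrow>
      (w (idx a) < w (idx b) \<longleftrightarrow> [p,q,r] ! a < [p,q,r] ! b)"
  proof (intro allI impI)
    fix a b assume ab: "a < length [p,q,r] \<and> b < length [p,q,r]"
    then show "w (idx a) < w (idx b) \<longleftrightarrow> [p,q,r] ! a < [p,q,r] ! b"
      using three[of a] three[of b] h unfolding idx_def by auto
  qed
  ultimately show "contains_pattern w [p, q, r]" unfolding contains_pattern_def by blast
qed

lemma c231: "contains_pattern w [2,3,1] \<longleftrightarrow> (\<exists>i j k. i < j \<and> j < k \<and> w k < w i \<and> w i < w j)"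
  unfolding contains3 by (auto; meson less_trans not_less_iff_gr_or_eq)

lemma c312: "contains_pattern w [3,1,2] \<longleftrightarrow> (\<exists>i j k. i < j \<and> j < k \<and> w j < w k \<and> w k < w i)"
  unfolding contains3 by (auto; meson less_trans not_less_iff_gr_or_eq)

lemma c132: "contains_pattern w [1,3,2] \<longleftrightarrow> (\<exists>i j k. i < j \<and> j < k \<and> w i < w k \<and> w k < w j)"
  unfolding contains3 by (auto; meson less_trans not_less_iff_gr_or_eq)

lemma c213: "contains_pattern w [2,1,3] \<longleftrightarrow> (\<exists>i j k. i < j \<and> j < k \<and> w j < w i \<and> w i < w k)"
  unfolding contains3 by (auto; meson less_trans not_less_iff_gr_or_eq)

lemma c123: "contains_pattern w [1,2,3] \<longleftrightarrow> (\<exists>i j k. i < j \<and> j < k \<and> w i < w j \<and> w j < w k)"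
  unfolding contains3 by (auto; meson less_trans not_less_iff_gr_or_eq)



lemma sum_shift_const:
  fixes w1 w2 :: "int \<Rightarrow> int" and N :: int
  assumes "N > 0" "\<And>i. w2 i = w1 i + c" "(\<Sum>i\<in>{1..N}. w2 i) = (\<Sum>i\<in>{1..N}. w1 i)"
  shows "c = 0"
proof -
  have "(\<Sum>i\<in>{1..N}. w2 i) = (\<Sum>i\<in>{1..N}. w1 i) + N * c"
    using assms(1,2) by (simp add: sum.distrib)
  then show ?thesis using assms(1,3) by simp
qed

lemma affine_perm_iff: "affine_perm n w \<longleftrightarrow> bij w \<and> (\<forall>i. w (i + int n) = w i + int n)
     \<and> (\<Sum>i\<in>{1..int n}. w i) = (\<Sum>i\<in>{1..int n}. i)"
  unfolding affine_perm_def gauss_choose by simp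

lemma id_affine: "affine_perm n id"
  unfolding affine_perm_iff by simp

lemma affine_eq_of_order:
  assumes "n > 0" "affine_perm n w1" "affine_perm n w2"
    and ord: "\<And>i j. w1 i < w1 j \<longleftrightarrow> w2 i < w2 j"
  shows "w1 = w2"
proof -
  obtain c where c: "\<And>i. w2 i = w1 i + c"
    using order_iso_shift[of w1 w2] assms unfolding affine_perm_iff by blast
  have s1: "(\<Sum>i\<in>{1..int n}. w1 i) = (\<Sum>i\<in>{1..int n}. i)" using assms(2) unfolding affine_perm_iff by blast
  have s2: "(\<Sum>i\<in>{1..int n}. w2 i) = (\<Sum>i\<in>{1..int n}. i)" using assms(3) unfolding affine_perm_iff by blast
  have "(\<Sum>i\<in>{1..int n}. w2 i) = (\<Sum>i\<in>{1..int n}. w1 i) + int n * c"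
    by (simp add: c sum.distrib)
  then have "int n * c = 0" using s1 s2 by simp
  then have "c = 0" using assms(1) by simp
  then show ?thesis using c by auto
qed

section \<open>123, 132, 213\<close>

lemma avoid123: assumes "n > 0" shows "avoiders n [1,2,3] = {}"
proof -
  { fix w assume w: "affine_perm n w"
    then have per: "\<And>i. w (i + int n) = w i + int n" unfolding affine_perm_def by blast
    have "w (0 + int n) = w 0 + int n" by (rule per)
    moreover have "w (int n + int n) = w (int n) + int n" by (rule per)
    ultimately have "contains_pattern w [1,2,3]" unfolding c123
      using assms by (intro exI[of _ 0] exI[of _ "int n"] exI[of _ "int n + int n"]) simp }
  then show ?thesis unfolding avoiders_def affine_sym_group_def avoids_pattern_def by blast
qed

lemma avoid132: assumes "n > 0" shows "avoiders n [1,3,2] = {id}"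
proof (intro equalityI subsetI)
  fix w assume "w \<in> avoiders n [1,3,2]"
  then have w: "affine_perm n w" and av: "\<not> contains_pattern w [1,3,2]"
    unfolding avoiders_def affine_sym_group_def avoids_pattern_def by auto
  have per: "\<And>i. w (i + int n) = w i + int n" and bw: "bij w"
    using w unfolding affine_perm_def by blast+
  have inc: "w i < w j" if "i < j" for i j
  proof (rule ccontr)
    assume "\<not> w i < w j"
    moreover have "w i \<noteq> w j" using bw that by (metis bij_def inj_eq less_irrefl)
    ultimately have lt: "w j < w i" by simp
    define m where "m = w i - w j + 1"
    have m1: "m \<ge> 1" using lt unfolding m_def by simp
    have "m \<le> m * int n" using m1 assms by simp
    have wx: "w (i + (-m) * int n) = w i + (-m) * int n" by (rule periodic_k[of w "int n", OF per])
    have "i + (-m) * int n < i" using m1 assms by (simp add: mult_pos_pos)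
    moreover have "w (i + (-m) * int n) < w j"
    proof -
      have "(-m) * int n = - (m * int n)" by simp
      then show ?thesis using wx \<open>m \<le> m * int n\<close> m_def by linarith
    qed
    ultimately have "contains_pattern w [1,3,2]" unfolding c132
      using that lt by blast
    then show False using av by simp
  qed
  have "id = w"
  proof (rule affine_eq_of_order[OF assms id_affine w])
    fix i j show "id i < id j \<longleftrightarrow> w i < w j"
      using inc[of i j] inc[of j i] by (cases i j rule: linorder_cases) auto
  qed
  then show "w \<in> {id}" by simp
next
  fix w :: "int \<Rightarrow> int" assume "w \<in> {id}"
  then show "w \<in> avoiders n [1,3,2]" unfolding avoiders_def affine_sym_group_def avoids_pattern_def c132
    using id_affine by auto
qed

lemma avoid213: assumes "n > 0" shows "avoiders n [2,1,3] = {id}"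
proof (intro equalityI subsetI)
  fix w assume "w \<in> avoiders n [2,1,3]"
  then have w: "affine_perm n w" and av: "\<not> contains_pattern w [2,1,3]"
    unfolding avoiders_def affine_sym_group_def avoids_pattern_def by auto
  have per: "\<And>i. w (i + int n) = w i + int n" and bw: "bij w"
    using w unfolding affine_perm_def by blast+
  have inc: "w i < w j" if "i < j" for i j
  proof (rule ccontr)
    assume "\<not> w i < w j"
    moreover have "w i \<noteq> w j" using bw that by (metis bij_def inj_eq less_irrefl)
    ultimately have lt: "w j < w i" by simp
    define m where "m = w i - w j + 1"
    have m1: "m \<ge> 1" using lt unfolding m_def by simp
    have "m \<le> m * int n" using m1 assms by simp
    have wx: "w (j + m * int n) = w j + m * int n" by (rule periodic_k[of w "int n", OF per])
    have "j < j + m * int n" using m1 assms by (simp add: mult_pos_pos)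
    moreover have "w i < w (j + m * int n)" using wx \<open>m \<le> m * int n\<close> m_def by linarith
    ultimately have "contains_pattern w [2,1,3]" unfolding c213
      using that lt by blast
    then show False using av by simp
  qed
  have "id = w"
  proof (rule affine_eq_of_order[OF assms id_affine w])
    fix i j show "id i < id j \<longleftrightarrow> w i < w j"
      using inc[of i j] inc[of j i] by (cases i j rule: linorder_cases) auto
  qed
  then show "w \<in> {id}" by simp
next
  fix w :: "int \<Rightarrow> int" assume "w \<in> {id}"
  then show "w \<in> avoiders n [2,1,3]" unfolding avoiders_def affine_sym_group_def avoids_pattern_def c213
    using id_affine by auto
qed



definition Phi :: "nat \<Rightarrow> (int \<Rightarrow> int) \<Rightarrow> nat list" where
  "Phi n w = map (\<lambda>j. card {i. hw w i = int j}) [1..<n+1]"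

lemma av231_iff: "w \<in> avoiders n [2,3,1] \<longleftrightarrow> affine_perm n w \<and>
   (\<forall>i j k. i < j \<longrightarrow> j < k \<longrightarrow> \<not> (w k < w i \<and> w i < w j))"
  unfolding avoiders_def affine_sym_group_def avoids_pattern_def c231 by blast

lemma telescope:
  assumes "good N h" "N > 0"
  shows "int (sum_list (map (\<lambda>j. card {i. h i = int j}) [1..<m+1])) = int m + Oh h 0 - Oh h (int m)"
proof (induct m)
  case 0 then show ?case by simp
next
  case (Suc m)
  have "[1..<Suc m + 1] = [1..<m+1] @ [m+1]" by simp
  then have "int (sum_list (map (\<lambda>j. card {i. h i = int j}) [1..<Suc m+1]))
     = int (sum_list (map (\<lambda>j. card {i. h i = int j}) [1..<m+1])) + int (card {i. h i = 1 + int m})"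
    by simp
  moreover have "Oh h (1 + int m) + int (card {i. h i = 1 + int m}) = Oh h (int m) + 1"
    using Oh_step[OF assms, of "1 + int m"] by simp
  ultimately show ?case using Suc by simp
qed

context
  fixes n :: nat
  assumes npos: "n > 0"
begin

abbreviation "NN \<equiv> int n"

lemma NNpos: "NN > 0" using npos by simp

lemma A_facts:
  assumes "w \<in> avoiders n [2,3,1]"
  shows "NN > 0" "\<And>i. w (i + NN) = w i + NN" "bij w"
    "\<And>i j k. i < j \<Longrightarrow> j < k \<Longrightarrow> \<not> (w k < w i \<and> w i < w j)"
    "(\<Sum>i\<in>{1..NN}. w i) = (\<Sum>i\<in>{1..NN}. i)"
  using assms NNpos unfolding av231_iff affine_perm_iff by blast+

lemma Phi_in:
  assumes "w \<in> avoiders n [2,3,1]"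
  shows "Phi n w \<in> {l. length l = n \<and> sum_list l = n}"
proof -
  note F = A_facts[OF assms]
  have gd: "good NN (hw w)" by (rule hw_good[OF F(1,2,3,4)])
  have "int (sum_list (Phi n w)) = int n + Oh (hw w) 0 - Oh (hw w) (int n)"
    unfolding Phi_def by (rule telescope[OF gd NNpos])
  moreover have "Oh (hw w) (0 + NN) = Oh (hw w) 0" by (rule Oh_per[OF gd NNpos])
  ultimately have "int (sum_list (Phi n w)) = int n" by simp
  then show ?thesis unfolding Phi_def by simp
qed

lemma Phi_inj: "inj_on (Phi n) (avoiders n [2,3,1])"
proof (rule inj_onI)
  fix w w' assume w: "w \<in> avoiders n [2,3,1]" and w': "w' \<in> avoiders n [2,3,1]"
    and eq: "Phi n w = Phi n w'"
  note F = A_facts[OF w] and F' = A_facts[OF w']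
  define h where "h = hw w"
  define h' where "h' = hw w'"
  have gd: "good NN h" unfolding h_def by (rule hw_good[OF F(1,2,3,4)])
  have gd': "good NN h'" unfolding h'_def by (rule hw_good[OF F'(1,2,3,4)])
  have win: "card {i. h i = p} = card {i. h' i = p}" if "p \<in> {1..NN}" for p
  proof -
    have "\<forall>j\<in>set [1..<n+1]. card {i. h i = int j} = card {i. h' i = int j}"
      using eq unfolding Phi_def h_def h'_def map_eq_conv by blast
    moreover have "nat p \<in> set [1..<n+1]" using that by auto
    ultimately show ?thesis using that by auto
  qed
  have cnt: "card {i. h i = p} = card {i. h' i = p}" for p
  proof (rule window_reduce[OF NNpos, where P="\<lambda>p. card {i. h i = p} = card {i. h' i = p}"])
    show "\<And>i. (card {k. h k = i + NN} = card {k. h' k = i + NN}) = (card {k. h k = i} = card {k. h' k = i})"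
      using cnt_per[OF gd NNpos] cnt_per[OF gd' NNpos] by simp
    show "\<And>r. r \<in> {1..NN} \<Longrightarrow> card {i. h i = r} = card {i. h' i = r}" by (rule win)
  qed
  have D: "Oh h' q - Oh h q = Oh h' 0 - Oh h 0" for q
  proof (induct q rule: int_induct[where k=0])
    case base then show ?case by simp
  next
    case (step1 q)
    then show ?case using Oh_step[OF gd NNpos, of "q+1"] Oh_step[OF gd' NNpos, of "q+1"] cnt[of "q+1"] by simp
  next
    case (step2 q)
    then show ?case using Oh_step[OF gd NNpos, of "q"] Oh_step[OF gd' NNpos, of "q"] cnt[of "q"] by simp
  qed
  have e: "Oh h' = (\<lambda>q. Oh h q + (Oh h' 0 - Oh h 0))" using D by (auto simp: fun_eq_iff algebra_simps)
  have "hO (Oh h') = hO (Oh h)" by (subst e) (rule hO_shift)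
  then have hh: "h' = h" using hO_Oh[OF gd NNpos] hO_Oh[OF gd' NNpos] by (auto simp: fun_eq_iff)
  have inj1: "w a = w b \<Longrightarrow> a = b" for a b using F(3) by (simp add: bij_def inj_eq)
  have inj2: "w' a = w' b \<Longrightarrow> a = b" for a b using F'(3) by (simp add: bij_def inj_eq)
  have o1: "i < j \<Longrightarrow> (w j < w i \<longleftrightarrow> j \<le> h i)" for i j
    unfolding h_def by (rule hw_order[OF F(1,2,3,4)])
  have o2: "i < j \<Longrightarrow> (w' j < w' i \<longleftrightarrow> j \<le> h i)" for i j
    unfolding hh[symmetric] h'_def by (rule hw_order[OF F'(1,2,3,4)])
  show "w = w'"
  proof (rule affine_eq_of_order[OF npos])
    show "affine_perm n w" "affine_perm n w'" using w w' unfolding av231_iff by blast+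
    fix i j show "w i < w j \<longleftrightarrow> w' i < w' j"
    proof (cases i j rule: linorder_cases)
      case less
      then have "w i \<noteq> w j" "w' i \<noteq> w' j" using inj1[of i j] inj2[of i j] by auto
      then show ?thesis using o1[OF less] o2[OF less] by auto
    next
      case equal then show ?thesis by simp
    next
      case greater
      then show ?thesis using o1[OF greater] o2[OF greater] by auto
    qed
  qed
qed

definition Fl :: "nat list \<Rightarrow> int \<Rightarrow> int" where
  "Fl l q = (q mod NN) - int (sum_list (take (nat (q mod NN)) l))"

lemma Fl_diff:
  assumes l: "length l = n" "sum_list l = n"
  shows "Fl l (q - 1) - Fl l q + 1 = int (l ! nat ((q - 1) mod NN))"
proof -
  define r where "r = (q - 1) mod NN"
  have r: "0 \<le> r" "r < NN" unfolding r_def using NNpos by simp_all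
  have qm: "q mod NN = (r + 1) mod NN" unfolding r_def by (simp add: mod_add_left_eq)
  have tk: "sum_list (take (Suc k) l) = sum_list (take k l) + l ! k" if "k < length l" for k
    using that by (simp add: take_Suc_conv_app_nth)
  show ?thesis
  proof (cases "r + 1 < NN")
    case True
    then have "q mod NN = r + 1" using qm r by simp
    moreover have "nat (r + 1) = Suc (nat r)" using r by simp
    moreover have "nat r < length l" using r l by simp
    ultimately show ?thesis unfolding Fl_def r_def[symmetric] using tk[of "nat r"] r by simp
  next
    case False
    then have rr: "r + 1 = NN" using r by simp
    then have "q mod NN = 0" using qm by simp
    moreover have "nat r = n - 1" using rr by simp
    moreover have "sum_list (take (Suc (n - 1)) l) = sum_list (take (n - 1) l) + l ! (n - 1)"
      using tk[of "n - 1"] l npos by simp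
    moreover have "Suc (n - 1) = n" using npos by simp
    ultimately show ?thesis unfolding Fl_def r_def[symmetric] using l rr by simp
  qed
qed

lemma Phi_surj:
  assumes lT: "l \<in> {l. length l = n \<and> sum_list l = n}"
  shows "l \<in> Phi n ` avoiders n [2,3,1]"
proof -
  have l: "length l = n" "sum_list l = n" using lT by auto
  define F where "F = Fl l"
  have Fper: "F (q + NN) = F q" for q unfolding F_def Fl_def by simp
  have Fd: "F (q - 1) - F q + 1 = int (l ! nat ((q - 1) mod NN))" for q
    unfolding F_def by (rule Fl_diff[OF l])
  have Fstep: "F q \<le> F (q - 1) + 1" for q using Fd[of q] by simp
  define h where "h = hO F"
  have gd: "good NN h" unfolding h_def by (rule hO_good[where N=NN and F=F, OF NNpos Fper])
  define w0 where "w0 = wh h"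
  have w0per: "w0 (i + NN) = w0 i + NN" for i unfolding w0_def by (rule wh_per[OF gd NNpos])
  have w0inj: "inj w0" unfolding w0_def by (rule wh_inj[OF gd NNpos])
  have w0surj: "surj w0" by (rule per_surj[OF NNpos w0per w0inj])
  have m1: "(\<Sum>i\<in>{1..NN}. w0 i) mod NN = (\<Sum>r\<in>{0..<NN}. r) mod NN"
    by (rule per_sum_mod[OF NNpos w0per w0inj])
  have m2: "(\<Sum>i\<in>{1..NN}. id i) mod NN = (\<Sum>r\<in>{0..<NN}. r) mod NN"
    by (rule per_sum_mod[OF NNpos]) auto
  have "(\<Sum>i\<in>{1..NN}. w0 i) mod NN = (\<Sum>i\<in>{1..NN}. i) mod NN" using m1 m2 by simp
  then have "NN dvd ((\<Sum>i\<in>{1..NN}. w0 i) - (\<Sum>i\<in>{1..NN}. i))"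
    using mod_eq_dvd_iff by blast
  then obtain s where s: "(\<Sum>i\<in>{1..NN}. w0 i) - (\<Sum>i\<in>{1..NN}. i) = NN * s" by (auto simp: dvd_def)
  define w where "w = (\<lambda>i. w0 i - s)"
  have wper: "w (i + NN) = w i + NN" for i unfolding w_def using w0per by simp
  have winj: "inj w" using w0inj unfolding w_def inj_def by simp
  have wsurj: "surj w"
  proof -
    { fix v obtain x where "w0 x = v + s" using w0surj by (metis surjD)
      then have "v = w x" unfolding w_def by simp
      then have "v \<in> range w" by blast }
    then show ?thesis by blast
  qed
  have wsum: "(\<Sum>i\<in>{1..NN}. w i) = (\<Sum>i\<in>{1..NN}. i)"
  proof -
    have "(\<Sum>i\<in>{1..NN}. w i) = (\<Sum>i\<in>{1..NN}. w0 i) - NN * s"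
      unfolding w_def by (simp add: sum_subtractf)
    then show ?thesis using s by simp
  qed
  have word: "i < j \<Longrightarrow> (w j < w i \<longleftrightarrow> j \<le> h i)" for i j
    unfolding w_def w0_def using wh_order[OF gd NNpos, of i j] by simp
  have aff: "affine_perm n w" unfolding affine_perm_iff using winj wsurj wper wsum by (simp add: bij_def)
  have avd: "\<not> (w k < w i \<and> w i < w j)" if "i < j" "j < k" for i j k
  proof
    assume a: "w k < w i \<and> w i < w j"
    then have "k \<le> h i" using word[of i k] that by simp
    then have "w j < w i" using word[of i j] that by simp
    then show False using a by simp
  qed
  have wA: "w \<in> avoiders n [2,3,1]" unfolding av231_iff using aff avd by blast
  have hwh: "hw w = h"
  proof
    fix i
    have "rset w i = {i<..h i}" unfolding rset_def using word[of i] by auto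
    then show "hw w i = h i" unfolding hw_def using gd_le[OF gd NNpos, of i] by simp
  qed
  have "Phi n w = l"
  proof (rule nth_equalityI)
    show "length (Phi n w) = length l" unfolding Phi_def using l by (simp del: upt_Suc)
    fix t assume "t < length (Phi n w)"
    then have t: "t < n" unfolding Phi_def by (simp del: upt_Suc)
    have "Phi n w ! t = card {i. h i = int (t + 1)}" unfolding Phi_def hwh using t by (simp del: upt_Suc add: add.commute)
    also have "\<dots> = nat (F (int (t+1) - 1) - F (int (t+1)) + 1)"
      unfolding h_def by (rule hO_count[OF NNpos Fper Fstep])
    also have "\<dots> = l ! nat ((int (t+1) - 1) mod NN)" using Fd[of "int (t+1)"] by simp
    also have "\<dots> = l ! t" using t by simp
    finally show "Phi n w ! t = l ! t" .
  qed
  then show ?thesis using wA by blast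
qed

lemma card231: "card (avoiders n [2,3,1]) = (2 * n - 1) choose n"
proof -
  have "bij_betw (Phi n) (avoiders n [2,3,1]) {l. length l = n \<and> sum_list l = n}"
    unfolding bij_betw_def using Phi_inj Phi_in Phi_surj by blast
  then have "card (avoiders n [2,3,1]) = card {l :: nat list. length l = n \<and> sum_list l = n}"
    by (rule bij_betw_same_card)
  also have "\<dots> = (n + n - 1) choose n" by (rule card_length_sum_list)
  finally show ?thesis by (simp add: mult_2)
qed

end



definition rho :: "nat \<Rightarrow> (int \<Rightarrow> int) \<Rightarrow> int \<Rightarrow> int" where
  "rho n w i = (int n + 1) - w (int n + 1 - i)"

lemma rho_rho: "rho n (rho n w) = w"
  unfolding rho_def by (simp add: fun_eq_iff)

lemma bij_refl: "bij (\<lambda>i::int. c - i)"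
  by (rule o_bij[of "\<lambda>i::int. c - i"]) (auto simp: fun_eq_iff)

lemma rho_affine:
  assumes "affine_perm n w"
  shows "affine_perm n (rho n w)"
proof -
  have bw: "bij w" and per: "\<And>i. w (i + int n) = w i + int n"
    and sm: "(\<Sum>i\<in>{1..int n}. w i) = (\<Sum>i\<in>{1..int n}. i)"
    using assms unfolding affine_perm_iff by blast+
  have "rho n w = (\<lambda>v. (int n + 1) - v) \<circ> w \<circ> (\<lambda>i. (int n + 1) - i)"
    unfolding rho_def by (simp add: fun_eq_iff)
  then have b: "bij (rho n w)" using bij_refl bw by (metis bij_comp)
  have p: "rho n w (i + int n) = rho n w i + int n" for i
  proof -
    have "w (int n + 1 - i) = w ((int n + 1 - (i + int n)) + int n) " by (rule arg_cong[where f=w]) simp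
    also have "\<dots> = w (int n + 1 - (i + int n)) + int n" by (rule per)
    finally show ?thesis unfolding rho_def by simp
  qed
  have bb: "bij_betw (\<lambda>i. int n + 1 - i) {1..int n} {1..int n}"
    by (rule bij_betw_byWitness[where f'="\<lambda>i. int n + 1 - i"]) auto
  have r: "(\<Sum>i\<in>{1..int n}. w (int n + 1 - i)) = (\<Sum>i\<in>{1..int n}. w i)"
    using sum.reindex_bij_betw[OF bb, of w] by simp
  have "(\<Sum>i\<in>{1..int n}. rho n w i) = (\<Sum>i\<in>{1..int n}. (int n + 1)) - (\<Sum>i\<in>{1..int n}. w (int n + 1 - i))"
    unfolding rho_def by (simp add: sum_subtractf)
  also have "\<dots> = int n * (int n + 1) - (\<Sum>i\<in>{1..int n}. i)" using r sm by simp
  also have "\<dots> = (\<Sum>i\<in>{1..int n}. i)" using gauss_int[of n] by simp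
  finally show ?thesis unfolding affine_perm_iff using b p by blast
qed

lemma rho_231: "contains_pattern (rho n w) [2,3,1] \<Longrightarrow> contains_pattern w [3,1,2]"
  unfolding c231 c312 rho_def
proof (elim exE conjE)
  fix i j k assume h: "i < j" "j < k" "int n + 1 - w (int n + 1 - k) < int n + 1 - w (int n + 1 - i)"
    "int n + 1 - w (int n + 1 - i) < int n + 1 - w (int n + 1 - j)"
  show "\<exists>i j k. i < j \<and> j < k \<and> w j < w k \<and> w k < w i"
    by (rule exI[of _ "int n + 1 - k"], rule exI[of _ "int n + 1 - j"], rule exI[of _ "int n + 1 - i"])
       (use h in simp)
qed

lemma rho_312: "contains_pattern (rho n w) [3,1,2] \<Longrightarrow> contains_pattern w [2,3,1]"
  unfolding c231 c312 rho_def
proof (elim exE conjE)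
  fix i j k assume h: "i < j" "j < k" "int n + 1 - w (int n + 1 - j) < int n + 1 - w (int n + 1 - k)"
    "int n + 1 - w (int n + 1 - k) < int n + 1 - w (int n + 1 - i)"
  show "\<exists>i j k. i < j \<and> j < k \<and> w k < w i \<and> w i < w j"
    by (rule exI[of _ "int n + 1 - k"], rule exI[of _ "int n + 1 - j"], rule exI[of _ "int n + 1 - i"])
       (use h in simp)
qed

lemma card312: "card (avoiders n [3,1,2]) = card (avoiders n [2,3,1])"
proof -
  have "bij_betw (rho n) (avoiders n [2,3,1]) (avoiders n [3,1,2])"
  proof (rule bij_betw_byWitness[where f'="rho n"])
    show "\<forall>a\<in>avoiders n [2,3,1]. rho n (rho n a) = a" by (simp add: rho_rho)
    show "\<forall>a\<in>avoiders n [3,1,2]. rho n (rho n a) = a" by (simp add: rho_rho)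
    show "rho n ` avoiders n [2,3,1] \<subseteq> avoiders n [3,1,2]"
      unfolding avoiders_def affine_sym_group_def avoids_pattern_def
      using rho_affine rho_312 by auto
    show "rho n ` avoiders n [3,1,2] \<subseteq> avoiders n [2,3,1]"
      unfolding avoiders_def affine_sym_group_def avoids_pattern_def
      using rho_affine rho_231 by auto
  qed
  then show ?thesis by (metis bij_betw_same_card)
qed

theorem theorem4p1:
  fixes n :: nat
  assumes "n \<ge> 2"
  shows "avoiders n [1,2,3] = {}
    \<and> avoiders n [1,3,2] = {id}
    \<and> avoiders n [2,1,3] = {id}
    \<and> card (avoiders n [2,3,1]) = card (avoiders n [3,1,2])
    \<and> card (avoiders n [2,3,1]) = (2 * n - 1) choose n
    \<and> card (avoiders n [3,1,2]) = (2 * n - 1) choose n"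
proof -
  have np: "n > 0" using assms by simp
  show ?thesis using avoid123[OF np] avoid132[OF np] avoid213[OF np] card312[of n] card231[OF np]
    by simp
qed

end
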